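(* (ZFC) $\mathfrak{d}\le\mathfrak{i}_{cl}$.
   Context: An independent family is a set $\mathcal{I}\subseteq\mathcal{P}(\omega)$ such that for all disjoint finite $\mathcal{A}_0,\mathcal{A}_1\subseteq\mathcal{I}$, the set $\bigcap_{x\in\mathcal{A}_0}x\cap\bigcap_{x\in\mathcal{A}_1}(\omega\setminus x)$ is infinite; it is a maximal independent family if it is maximal under inclusion among independent families. $\mathfrak{i}_{cl}$ is the smallest cardinality of a collection of closed subsets of $\mathcal{P}(\omega)$ (identified with $2^\omega$ via characteristic functions) whose union is a maximal independent family. $\mathfrak{d}$ is the dominating number, the least size of a family $\mathcal{F}\subseteq\omega^\omega$ such that every $g\in\omega^\omega$ is eventually dominated by some member of $\mathcal{F}$. *)

theory Defs
  imports "HOL-Analysis.Analysis"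
begin

text \<open>Subsets of omega are identified with points of the Cantor space nat => bool
  (product topology of discrete bool) via characteristic functions.\<close>

definition char_fun :: "nat set \<Rightarrow> (nat \<Rightarrow> bool)" where
  "char_fun x = (\<lambda>n. n \<in> x)"

definition closed_in_P_omega :: "nat set set \<Rightarrow> bool" where
  "closed_in_P_omega c \<longleftrightarrow> closed (char_fun ` c)"

definition independent_family :: "nat set set \<Rightarrow> bool" where
  "independent_family I \<longleftrightarrow>
     (\<forall>A0 A1. finite A0 \<and> finite A1 \<and> A0 \<subseteq> I \<and> A1 \<subseteq> I \<and> A0 \<inter> A1 = {} \<longrightarrow>
        infinite ((\<Inter>x\<in>A0. x) \<inter> (\<Inter>x\<in>A1. - x)))"

definition maximal_independent_family :: "nat set set \<Rightarrow> bool" where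
  "maximal_independent_family I \<longleftrightarrow> independent_family I \<and>
     (\<forall>J. independent_family J \<and> I \<subseteq> J \<longrightarrow> J = I)"

definition dominating_family :: "(nat \<Rightarrow> nat) set \<Rightarrow> bool" where
  "dominating_family F \<longleftrightarrow> (\<forall>g. \<exists>f\<in>F. \<forall>\<^sub>F n in sequentially. g n \<le> f n)"

end

theory Submission
  imports Defs "HOL-Algebra.Free_Abelian_Groups"
begin

lemma compact_UNIV_bool_fun: "compact (UNIV :: (nat \<Rightarrow> bool) set)"
proof -
  have "compact_space (product_topology (\<lambda>i::nat. (euclidean :: bool topology)) UNIV)"
    unfolding compact_space_product_topology
    by (auto simp: compact_space_def finite_imp_compact)
  then show ?thesis by (simp add: euclidean_product_topology compact_space_def)
qed


lemma compact_UNIV_bool_fun2: "compact (UNIV :: (nat \<Rightarrow> nat \<Rightarrow> bool) set)"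
proof -
  have "compact_space (product_topology (\<lambda>i::nat. (euclidean :: (nat \<Rightarrow> bool) topology)) UNIV)"
    unfolding compact_space_product_topology
    using compact_UNIV_bool_fun by (auto simp: compact_space_def)
  then show ?thesis by (simp add: euclidean_product_topology compact_space_def)
qed


lemma cont_coord2: "continuous_on UNIV (\<lambda>z::nat \<Rightarrow> nat \<Rightarrow> bool. z p q)"
proof -
  have "continuous_on UNIV ((\<lambda>y::nat\<Rightarrow>bool. y q) \<circ> (\<lambda>z::nat \<Rightarrow> nat \<Rightarrow> bool. z p))"
    by (rule continuous_on_compose) (auto intro: continuous_on_product_coordinates continuous_on_subset)
  then show ?thesis by (simp add: o_def)
qed


lemma open_fin_dep2:
  fixes P :: "(nat \<Rightarrow> nat \<Rightarrow> bool) \<Rightarrow> bool"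
  assumes fin: "finite S"
    and dep: "\<And>z z'. (\<And>p q. (p,q)\<in>S \<Longrightarrow> z p q = z' p q) \<Longrightarrow> P z \<Longrightarrow> P z'"
  shows "open {z. P z}"
  unfolding open_subopen[of "{z. P z}"]
proof
  fix z assume "z \<in> {z. P z}"
  define T where "T = (\<Inter>pq\<in>S. (\<lambda>y::nat \<Rightarrow> nat \<Rightarrow> bool. y (fst pq) (snd pq)) -` {z (fst pq) (snd pq)})"
  have "open T" unfolding T_def
    by (intro open_INT fin ballI open_vimage cont_coord2 open_discrete)
  moreover have "z \<in> T" unfolding T_def by auto
  moreover have "T \<subseteq> {z. P z}"
  proof
    fix y assume "y \<in> T"
    then have "\<And>p q. (p,q)\<in>S \<Longrightarrow> z p q = y p q" unfolding T_def by force
    then show "y \<in> {z. P z}" using dep \<open>z \<in> {z. P z}\<close> by blast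
  qed
  ultimately show "\<exists>T. open T \<and> z \<in> T \<and> T \<subseteq> {z. P z}" by blast
qed


lemma closed_fin_dep2:
  fixes P :: "(nat \<Rightarrow> nat \<Rightarrow> bool) \<Rightarrow> bool"
  assumes fin: "finite S"
    and dep: "\<And>z z'. (\<And>p q. (p,q)\<in>S \<Longrightarrow> z p q = z' p q) \<Longrightarrow> P z \<Longrightarrow> P z'"
  shows "closed {z. P z}"
proof -
  have "open {z. \<not> P z}"
    by (rule open_fin_dep2[OF fin]) (metis dep)
  moreover have "- {z. P z} = {z. \<not> P z}" by auto
  ultimately show ?thesis by (simp add: closed_def)
qed


lemma open_cyl1:
  fixes B :: "nat \<Rightarrow> bool"
  shows "open {y::nat\<Rightarrow>bool. \<forall>k<n. y k = B k}"
proof -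
  have "{y::nat\<Rightarrow>bool. \<forall>k<n. y k = B k} = (\<Inter>k\<in>{..<n}. (\<lambda>y. y k) -` {B k})" by auto
  moreover have "open (\<Inter>k\<in>{..<n}. (\<lambda>y::nat\<Rightarrow>bool. y k) -` {B k})"
    by (intro open_INT finite_lessThan ballI open_vimage continuous_on_product_coordinates open_discrete)
  ultimately show ?thesis by simp
qed


lemma compact_bound:
  fixes K :: "'a::topological_space set"
  assumes "compact K" and op: "\<And>M. open {z. R z (M::nat)}"
    and ex: "\<And>z. z \<in> K \<Longrightarrow> \<exists>M. R z M"
    and mono: "\<And>z M M'. R z M \<Longrightarrow> M \<le> M' \<Longrightarrow> R z M'"
  shows "\<exists>M. \<forall>z\<in>K. R z M"
proof -
  have cov: "K \<subseteq> \<Union> ((\<lambda>M. {z. R z M}) ` UNIV)" using ex by blast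
  have "\<exists>T. finite T \<and> K \<subseteq> \<Union> ((\<lambda>M. {z. R z M}) ` T)"
  proof (rule compactE_image[OF assms(1), of UNIV "\<lambda>M. {z. R z M}"])
    show "\<And>T. T \<in> UNIV \<Longrightarrow> open {z. R z T}" by (rule op)
    show "K \<subseteq> \<Union> ((\<lambda>M. {z. R z M}) ` UNIV)" by (rule cov)
  qed blast
  then obtain T where T: "finite T" "K \<subseteq> \<Union> ((\<lambda>M. {z. R z M}) ` T)" by blast
  have "\<forall>z\<in>K. R z (\<Sum>T)"
  proof
    fix z assume "z \<in> K"
    then obtain M where "M \<in> T" "R z M" using T by blast
    moreover have "M \<le> \<Sum>T" using member_le_sum[of M T "\<lambda>x. x"] T(1) \<open>M \<in> T\<close> by simp
    ultimately show "R z (\<Sum>T)" using mono by blast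
  qed
  then show ?thesis by blast
qed



lemma indepD:
  assumes "independent_family I" "finite A0" "finite A1" "A0 \<subseteq> I" "A1 \<subseteq> I" "A0 \<inter> A1 = {}"
  shows "infinite ((\<Inter>x\<in>A0. x) \<inter> (\<Inter>x\<in>A1. - x))"
  using assms unfolding independent_family_def by (elim allE[of _ A0] allE[of _ A1]) simp

lemma infinite_evens: "infinite {n::nat. even n}"
  unfolding infinite_nat_iff_unbounded_le
proof
  fix m :: nat show "\<exists>n\<ge>m. n \<in> {n. even n}" by (rule exI[of _ "2*m"]) simp
qed

lemma infinite_odds: "infinite {n::nat. odd n}"
  unfolding infinite_nat_iff_unbounded_le
proof
  fix m :: nat show "\<exists>n\<ge>m. n \<in> {n. odd n}" by (rule exI[of _ "2*m+1"]) simp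
qed


lemma char_fun_inj: "inj char_fun"
  by (rule injI) (auto simp: char_fun_def fun_eq_iff)

lemma char_fun_apply: "char_fun x k = (k \<in> x)" by (simp add: char_fun_def)


lemma not_maximal_if_split:
  assumes ind: "independent_family I"
    and split: "\<And>A0 A1. finite A0 \<Longrightarrow> finite A1 \<Longrightarrow> A0 \<subseteq> I \<Longrightarrow> A1 \<subseteq> I \<Longrightarrow> A0 \<inter> A1 = {} \<Longrightarrow>
       infinite (((\<Inter>x\<in>A0. x) \<inter> (\<Inter>x\<in>A1. - x)) \<inter> D) \<and> infinite (((\<Inter>x\<in>A0. x) \<inter> (\<Inter>x\<in>A1. - x)) - D)"
  shows "\<not> maximal_independent_family I"
proof
  assume max: "maximal_independent_family I"
  have DnI: "D \<notin> I"
  proof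
    assume "D \<in> I"
    then have "infinite (((\<Inter>x\<in>{D}. x) \<inter> (\<Inter>x\<in>{}. - x)) - D)" using split[of "{D}" "{}"] by simp
    moreover have "((\<Inter>x\<in>{D}. x) \<inter> (\<Inter>x\<in>{}. - x)) - D = {}" by simp
    ultimately show False by simp
  qed
  have "independent_family (insert D I)"
    unfolding independent_family_def
  proof (intro allI impI)
    fix A0 A1 assume H: "finite A0 \<and> finite A1 \<and> A0 \<subseteq> insert D I \<and> A1 \<subseteq> insert D I \<and> A0 \<inter> A1 = {}"
    show "infinite ((\<Inter>x\<in>A0. x) \<inter> (\<Inter>x\<in>A1. - x))"
    proof (cases "D \<in> A0")
      case True
      then have nA1: "D \<notin> A1" using H by blast
      define B0 where "B0 = A0 - {D}"
      have A0eq: "A0 = insert D B0" using True B0_def by blast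
      have eq: "(\<Inter>x\<in>A0. x) \<inter> (\<Inter>x\<in>A1. - x) = ((\<Inter>x\<in>B0. x) \<inter> (\<Inter>x\<in>A1. - x)) \<inter> D"
        unfolding A0eq INT_insert by blast
      have "finite B0" "B0 \<subseteq> I" "A1 \<subseteq> I" "B0 \<inter> A1 = {}" using H nA1 B0_def by blast+
      then have "infinite (((\<Inter>x\<in>B0. x) \<inter> (\<Inter>x\<in>A1. - x)) \<inter> D)"
        using split[of B0 A1] H by blast
      then show ?thesis using eq by simp
    next
      case False
      show ?thesis
      proof (cases "D \<in> A1")
        case True
        define B1 where "B1 = A1 - {D}"
        have A1eq: "A1 = insert D B1" using True B1_def by blast
        have eq: "(\<Inter>x\<in>A0. x) \<inter> (\<Inter>x\<in>A1. - x) = ((\<Inter>x\<in>A0. x) \<inter> (\<Inter>x\<in>B1. - x)) - D"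
          unfolding A1eq INT_insert by blast
        have "finite B1" "A0 \<subseteq> I" "B1 \<subseteq> I" "A0 \<inter> B1 = {}" using H False B1_def by blast+
        then have "infinite (((\<Inter>x\<in>A0. x) \<inter> (\<Inter>x\<in>B1. - x)) - D)"
          using split[of A0 B1] H by blast
        then show ?thesis using eq by simp
      next
        case False
        then have "A0 \<subseteq> I" "A1 \<subseteq> I" using H \<open>D \<notin> A0\<close> by blast+
        moreover have "finite A0" "finite A1" "A0 \<inter> A1 = {}" using H by blast+
        ultimately show ?thesis using indepD[OF ind] by blast
      qed
    qed
  qed
  then have "insert D I = I" using max unfolding maximal_independent_family_def by blast
  then show False using DnI by blast
qed

lemma finite_case_split:
  assumes ind: "independent_family I" and fin: "finite I"
  shows "\<exists>D. \<forall>A0 A1. finite A0 \<longrightarrow> finite A1 \<longrightarrow> A0 \<subseteq> I \<longrightarrow> A1 \<subseteq> I \<longrightarrow> A0 \<inter> A1 = {} \<longrightarrow>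
       infinite (((\<Inter>x\<in>A0. x) \<inter> (\<Inter>x\<in>A1. - x)) \<inter> D) \<and> infinite (((\<Inter>x\<in>A0. x) \<inter> (\<Inter>x\<in>A1. - x)) - D)"
proof -
  define atom where "atom m = {m'. \<forall>x\<in>I. (m' \<in> x) = (m \<in> x)}" for m
  have atom_inf: "infinite (atom m)" for m
  proof -
    let ?A0 = "{x\<in>I. m\<in>x}"
    let ?A1 = "{x\<in>I. m\<notin>x}"
    have "finite ?A0" "finite ?A1" using fin by auto
    then have "infinite ((\<Inter>x\<in>?A0. x) \<inter> (\<Inter>x\<in>?A1. - x))"
      by (intro indepD[OF ind]) auto
    moreover have "(\<Inter>x\<in>?A0. x) \<inter> (\<Inter>x\<in>?A1. - x) \<subseteq> atom m" unfolding atom_def by auto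
    ultimately show ?thesis using finite_subset by blast
  qed
  have atom_eq: "atom m' = atom m" if "m' \<in> atom m" for m m' using that unfolding atom_def by auto
  define D where "D = {m. \<exists>n. even n \<and> enumerate (atom m) n = m}"
  have keyD: "infinite (atom m \<inter> D) \<and> infinite (atom m - D)" for m
  proof -
    let ?S = "atom m"
    have sm: "strict_mono (enumerate ?S)" using strict_mono_enumerate atom_inf by blast
    have inj: "inj (enumerate ?S)" using sm strict_mono_imp_inj_on by blast
    have in1: "enumerate ?S n \<in> ?S" for n using enumerate_in_set atom_inf by blast
    have at: "atom (enumerate ?S n) = ?S" for n by (rule atom_eq[OF in1])
    have s1: "enumerate ?S ` {n. even n} \<subseteq> ?S \<inter> D" using in1 at unfolding D_def by auto
    have s2: "enumerate ?S ` {n. odd n} \<subseteq> ?S - D"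
    proof
      fix y assume "y \<in> enumerate ?S ` {n. odd n}"
      then obtain n where n: "odd n" "y = enumerate ?S n" by auto
      have "y \<notin> D"
      proof
        assume "y \<in> D"
        then obtain n' where n': "even n'" "enumerate (atom y) n' = y" unfolding D_def by auto
        then have "enumerate ?S n' = enumerate ?S n" using at n by simp
        then have "n' = n" using inj by (simp add: inj_eq)
        then show False using n n' by simp
      qed
      then show "y \<in> ?S - D" using n in1 by simp
    qed
    have "infinite (enumerate ?S ` {n. even n})"
      using infinite_evens finite_imageD inj inj_on_subset by (metis subset_UNIV)
    moreover have "infinite (enumerate ?S ` {n. odd n})"
      using infinite_odds finite_imageD inj inj_on_subset by (metis subset_UNIV)
    ultimately show ?thesis using finite_subset[OF s1] finite_subset[OF s2] by blast
  qed
  show ?thesis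
  proof (intro exI allI impI)
    fix A0 A1 :: "nat set set"
    assume H: "finite A0" "finite A1" "A0 \<subseteq> I" "A1 \<subseteq> I" "A0 \<inter> A1 = {}"
    let ?r = "(\<Inter>x\<in>A0. x) \<inter> (\<Inter>x\<in>A1. - x)"
    have "infinite ?r" using indepD[OF ind H] .
    then obtain m0 where m0: "m0 \<in> ?r" by (metis finite.emptyI ex_in_conv)
    have sub: "atom m0 \<subseteq> ?r"
    proof
      fix m' assume "m' \<in> atom m0"
      then have eqm: "\<forall>x\<in>I. (m' \<in> x) = (m0 \<in> x)" unfolding atom_def by simp
      have "m' \<in> x" if "x \<in> A0" for x using that eqm m0 H(3) by blast
      moreover have "m' \<notin> x" if "x \<in> A1" for x using that eqm m0 H(4) by blast
      ultimately show "m' \<in> ?r" by blast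
    qed
    have s1: "atom m0 \<inter> D \<subseteq> ?r \<inter> D" using sub by blast
    have s2: "atom m0 - D \<subseteq> ?r - D" using sub by blast
    have k1: "infinite (atom m0 \<inter> D)" using keyD[of m0] by blast
    have k2: "infinite (atom m0 - D)" using keyD[of m0] by blast
    show "infinite (?r \<inter> D) \<and> infinite (?r - D)"
      using k1 k2 finite_subset[OF s1] finite_subset[OF s2] by blast
  qed
qed

lemma countable_not_dominating:
  assumes "countable F" shows "\<not> dominating_family F"
proof
  assume dom: "dominating_family F"
  define f where "f = from_nat_into F"
  define g where "g n = Suc (\<Sum>i\<le>n. f i n)" for n
  obtain h where h: "h \<in> F" "\<forall>\<^sub>F n in sequentially. g n \<le> h n"
    using dom unfolding dominating_family_def by blast
  obtain i where i: "f i = h" using from_nat_into_surj[OF assms h(1)] f_def by blast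
  obtain N where N: "\<forall>n\<ge>N. g n \<le> h n" using h(2) unfolding eventually_sequentially by blast
  let ?n = "max N i"
  have "f i ?n \<le> (\<Sum>i'\<le>?n. f i' ?n)" by (rule member_le_sum) auto
  then have "h ?n < g ?n" using i g_def by simp
  moreover have "g ?n \<le> h ?n" using N by simp
  ultimately show False by simp
qed


lemma seq_exists:
  assumes inf: "infinite I"
  shows "\<exists>A B. (\<forall>l. A l \<in> I) \<and> (\<forall>l. char_fun (A l) \<noteq> B) \<and> (\<forall>l k. k < l \<longrightarrow> (k \<in> A l) = B k) \<and> inj A"
proof -
  have "inj_on char_fun I" using char_fun_inj inj_on_subset by blast
  then have "infinite (char_fun ` I)" using inf finite_imageD by blast
  then obtain B where B: "B islimpt (char_fun ` I)"
    using Heine_Borel_imp_Bolzano_Weierstrass[OF compact_UNIV_bool_fun _ subset_UNIV] by blast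
  have pick: "\<exists>y\<in>I. char_fun y \<noteq> B \<and> (\<forall>k<n. (k\<in>y) = B k)" for n
  proof -
    have Bin: "B \<in> {y::nat\<Rightarrow>bool. \<forall>k<n. y k = B k}" by simp
    obtain y' where y': "y' \<in> char_fun ` I" "y' \<in> {y::nat\<Rightarrow>bool. \<forall>k<n. y k = B k}" "y' \<noteq> B"
      using islimptE[OF B Bin open_cyl1[of n B]] by blast
    from y'(1) obtain y where y: "y \<in> I" "y' = char_fun y" by blast
    have "\<forall>k<n. (k\<in>y) = B k" using y'(2) y(2) by (simp add: char_fun_apply)
    then show ?thesis using y y'(3) by blast
  qed
  then have "\<forall>n. \<exists>y. y \<in> I \<and> char_fun y \<noteq> B \<and> (\<forall>k<n. (k\<in>y) = B k)" by blast
  then obtain p where p0: "\<forall>n. p n \<in> I \<and> char_fun (p n) \<noteq> B \<and> (\<forall>k<n. (k \<in> p n) = B k)"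
    by (rule choice[THEN exE]) blast
  then have p: "\<And>n. p n \<in> I \<and> char_fun (p n) \<noteq> B \<and> (\<forall>k<n. (k \<in> p n) = B k)" by blast
  define d where "d y = (LEAST k. (k \<in> y) \<noteq> B k)" for y
  have d1: "(d (p n) \<in> p n) \<noteq> B (d (p n))" for n
  proof -
    have "\<exists>k. (k \<in> p n) \<noteq> B k" using p[of n] by (auto simp: char_fun_def fun_eq_iff)
    then show ?thesis unfolding d_def by (rule LeastI_ex)
  qed
  have d_ge: "n \<le> d (p n)" for n
  proof (rule ccontr)
    assume "\<not> n \<le> d (p n)"
    then have "(d (p n) \<in> p n) = B (d (p n))" using p[of n] by auto
    then show False using d1 by simp
  qed
  define e where "e l = ((\<lambda>el. Suc (d (p el))) ^^ l) 0" for l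
  have e0: "e 0 = 0" and eS: "e (Suc l) = Suc (d (p (e l)))" for l unfolding e_def by simp_all
  have e_ge: "l \<le> e l" for l
  proof (induction l)
    case 0 then show ?case by simp
  next
    case (Suc l) then show ?case using eS d_ge[of "e l"] by simp
  qed
  have sm: "strict_mono e"
    unfolding strict_mono_Suc_iff using eS d_ge by (simp add: le_imp_less_Suc)
  define A where "A l = p (e l)" for l
  have dA: "d (A l) < d (A l')" if "l < l'" for l l'
  proof -
    have "d (A l) < e (Suc l)" using eS A_def by simp
    also have "e (Suc l) \<le> e l'" using sm that by (simp add: strict_mono_less_eq)
    also have "e l' \<le> d (A l')" using d_ge A_def by simp
    finally show ?thesis .
  qed
  have injA: "inj A"
  proof (rule injI)
    fix l l' assume "A l = A l'"
    then show "l = l'" using dA by (metis less_irrefl nat_neq_iff)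
  qed
  have "\<forall>l. A l \<in> I" "\<forall>l. char_fun (A l) \<noteq> B" using p A_def by auto
  moreover have "\<forall>l k. k < l \<longrightarrow> (k \<in> A l) = B k"
  proof (intro allI impI)
    fix l k :: nat assume "k < l"
    then have "k < e l" using e_ge[of l] by simp
    then show "(k \<in> A l) = B k" using p[of "e l"] A_def by simp
  qed
  ultimately show ?thesis using injA by blast
qed


definition Kset :: "(nat \<Rightarrow> bool) \<Rightarrow> nat set set \<Rightarrow> nat \<Rightarrow> nat \<Rightarrow> (nat \<Rightarrow> nat \<Rightarrow> bool) set" where
  "Kset B U n N = {z. (\<forall>i<n. z i \<in> char_fun ` U) \<and> (\<forall>i<n. \<forall>j<n. i \<noteq> j \<longrightarrow> (\<exists>k<N. z i k \<noteq> z j k))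
      \<and> (\<forall>i<n. z i = B \<or> (\<exists>k<N. z i k \<noteq> B k))}"

definition Pz :: "(nat \<Rightarrow> nat set) \<Rightarrow> nat \<Rightarrow> nat \<Rightarrow> nat \<Rightarrow> (nat \<Rightarrow> nat \<Rightarrow> bool) \<Rightarrow> nat \<Rightarrow> bool" where
  "Pz A n N a z m \<longleftrightarrow> (\<forall>i<n. z i m = z (Suc n) i) \<and> (\<forall>l. N \<le> l \<and> l \<le> Suc a \<longrightarrow> (m \<in> A l) = z n l)"

definition Rz :: "(nat \<Rightarrow> nat set) \<Rightarrow> nat \<Rightarrow> nat \<Rightarrow> nat \<Rightarrow> (nat \<Rightarrow> nat \<Rightarrow> bool) \<Rightarrow> nat \<Rightarrow> bool" where
  "Rz A n N a z M \<longleftrightarrow> (\<exists>m. a \<le> m \<and> m < M \<and> Pz A n N a z m)"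

definition Hb :: "(nat \<Rightarrow> nat set) \<Rightarrow> (nat \<Rightarrow> bool) \<Rightarrow> nat set set \<Rightarrow> nat \<Rightarrow> nat \<Rightarrow> nat \<Rightarrow> nat" where
  "Hb A B U n N a = (LEAST M. \<forall>z\<in>Kset B U n N. Rz A n N a z M)"

lemma KsetD1: "z \<in> Kset B U n N \<Longrightarrow> i < n \<Longrightarrow> z i \<in> char_fun ` U"
  by (simp add: Kset_def)
lemma KsetD2: "z \<in> Kset B U n N \<Longrightarrow> i < n \<Longrightarrow> j < n \<Longrightarrow> i \<noteq> j \<Longrightarrow> \<exists>k<N. z i k \<noteq> z j k"
  by (simp add: Kset_def)
lemma KsetD3: "z \<in> Kset B U n N \<Longrightarrow> i < n \<Longrightarrow> z i = B \<or> (\<exists>k<N. z i k \<noteq> B k)"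
  by (simp add: Kset_def)

lemma closed_eqB:
  fixes B :: "nat \<Rightarrow> bool"
  shows "closed {z::nat\<Rightarrow>nat\<Rightarrow>bool. z i = B}"
proof -
  have "{z::nat\<Rightarrow>nat\<Rightarrow>bool. z i = B} = (\<Inter>k. {z. z i k = B k})" by (auto simp: fun_eq_iff)
  moreover have "closed {z::nat\<Rightarrow>nat\<Rightarrow>bool. z i k = B k}" for k
    by (rule closed_fin_dep2[of "{(i,k)}"]) auto
  ultimately show ?thesis by (simp add: closed_INT)
qed

lemma Kset_closed:
  assumes "closed (char_fun ` U)"
  shows "closed (Kset B U n N)"
proof -
  define K1 where "K1 = (\<Inter>i\<in>{..<n}. (\<lambda>z::nat\<Rightarrow>nat\<Rightarrow>bool. z i) -` (char_fun ` U))"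
  define K2 where "K2 = {z::nat\<Rightarrow>nat\<Rightarrow>bool. \<forall>i<n. \<forall>j<n. i \<noteq> j \<longrightarrow> (\<exists>k<N. z i k \<noteq> z j k)}"
  define K3 where "K3 = (\<Inter>i\<in>{..<n}. {z::nat\<Rightarrow>nat\<Rightarrow>bool. z i = B} \<union> {z. \<exists>k<N. z i k \<noteq> B k})"
  have c1: "closed K1" unfolding K1_def
    by (intro closed_INT ballI closed_vimage assms continuous_on_product_coordinates)
  have c2: "closed K2" unfolding K2_def
  proof (rule closed_fin_dep2[of "{..<n} \<times> {..<N}"])
    fix z z' :: "nat\<Rightarrow>nat\<Rightarrow>bool"
    assume ag: "\<And>p q. (p, q) \<in> {..<n} \<times> {..<N} \<Longrightarrow> z p q = z' p q"
      and P: "\<forall>i<n. \<forall>j<n. i \<noteq> j \<longrightarrow> (\<exists>k<N. z i k \<noteq> z j k)"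
    show "\<forall>i<n. \<forall>j<n. i \<noteq> j \<longrightarrow> (\<exists>k<N. z' i k \<noteq> z' j k)"
    proof (intro allI impI)
      fix i j assume ij: "i < n" "j < n" "i \<noteq> j"
      then obtain k where "k < N" "z i k \<noteq> z j k" using P by blast
      then show "\<exists>k<N. z' i k \<noteq> z' j k" using ag[of i k] ag[of j k] ij by auto
    qed
  qed simp
  have c3: "closed K3" unfolding K3_def
  proof (intro closed_INT ballI closed_Un closed_eqB)
    fix i
    show "closed {z::nat\<Rightarrow>nat\<Rightarrow>bool. \<exists>k<N. z i k \<noteq> B k}"
    proof (rule closed_fin_dep2[of "{i} \<times> {..<N}"])
      fix z z' :: "nat\<Rightarrow>nat\<Rightarrow>bool"
      assume ag: "\<And>p q. (p, q) \<in> {i} \<times> {..<N} \<Longrightarrow> z p q = z' p q" and P: "\<exists>k<N. z i k \<noteq> B k"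
      then obtain k where "k < N" "z i k \<noteq> B k" by blast
      then show "\<exists>k<N. z' i k \<noteq> B k" using ag[of i k] by auto
    qed simp
  qed
  have "Kset B U n N = K1 \<inter> K2 \<inter> K3"
    unfolding Kset_def K1_def K2_def K3_def by blast
  then show ?thesis using c1 c2 c3 by (simp add: closed_Int)
qed

lemma Rz_open: "open {z. Rz A n N a z M}"
proof (rule open_fin_dep2[of "({..<n} \<times> {..<M}) \<union> ({Suc n} \<times> {..<n}) \<union> ({n} \<times> {..Suc a})"])
  fix z z' :: "nat\<Rightarrow>nat\<Rightarrow>bool"
  assume ag: "\<And>p q. (p, q) \<in> ({..<n} \<times> {..<M}) \<union> ({Suc n} \<times> {..<n}) \<union> ({n} \<times> {..Suc a}) \<Longrightarrow> z p q = z' p q"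
    and R: "Rz A n N a z M"
  then obtain m where m: "a \<le> m" "m < M" "Pz A n N a z m" unfolding Rz_def by blast
  have "Pz A n N a z' m"
    unfolding Pz_def
  proof (intro conjI allI impI)
    fix i assume "i < n"
    then show "z' i m = z' (Suc n) i" using m ag[of i m] ag[of "Suc n" i] unfolding Pz_def by auto
  next
    fix l assume "N \<le> l \<and> l \<le> Suc a"
    then show "(m \<in> A l) = z' n l" using m ag[of n l] unfolding Pz_def by auto
  qed
  then show "Rz A n N a z' M" unfolding Rz_def using m by blast
qed simp


lemma hit_exists_z:
  assumes ind: "independent_family I" and UI: "U \<subseteq> I"
    and A1: "\<forall>l. A l \<in> I" and A2: "\<forall>l. char_fun (A l) \<noteq> B"
    and A3: "\<forall>l k. k < l \<longrightarrow> (k \<in> A l) = B k" and A4: "inj A"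
    and zK: "z \<in> Kset B U n N"
  shows "\<exists>M. Rz A n N a z M"
proof -
  define X where "X i = {m. z i m}" for i
  have cX: "char_fun (X i) = z i" for i by (simp add: X_def char_fun_def)
  have XU: "X i \<in> U" if "i < n" for i
  proof -
    have "z i \<in> char_fun ` U" using KsetD1[OF zK that] .
    then obtain u where "u \<in> U" "z i = char_fun u" by blast
    then show ?thesis using cX char_fun_inj by (metis injD)
  qed
  have Xinj: "i = j" if ij: "i < n" "j < n" "X i = X j" for i j
  proof (rule ccontr)
    assume "i \<noteq> j"
    then obtain k where "z i k \<noteq> z j k" using KsetD2[OF zK ij(1,2)] by blast
    then show False using ij(3) cX by metis
  qed
  have XA: "X i \<noteq> A l" if "i < n" "N \<le> l" for i l
  proof
    assume XAeq: "X i = A l"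
    have "z i = B \<or> (\<exists>k<N. z i k \<noteq> B k)" using KsetD3[OF zK that(1)] .
    then show False
    proof
      assume "z i = B" then show False using A2 cX XAeq by metis
    next
      assume "\<exists>k<N. z i k \<noteq> B k"
      then obtain k where k: "k < N" "z i k \<noteq> B k" by blast
      have "z i k = (k \<in> A l)" using cX XAeq char_fun_apply by metis
      moreover have "(k \<in> A l) = B k" using A3 k that by auto
      ultimately show False using k by simp
    qed
  qed
  define L where "L = {N..Suc a}"
  define A0 where "A0 = X ` {i. i < n \<and> z (Suc n) i} \<union> A ` {l\<in>L. z n l}"
  define A1' where "A1' = X ` {i. i < n \<and> \<not> z (Suc n) i} \<union> A ` {l\<in>L. \<not> z n l}"
  have f0: "finite A0" unfolding A0_def L_def by auto
  have f1: "finite A1'" unfolding A1'_def L_def by auto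
  have s0: "A0 \<subseteq> I" unfolding A0_def using XU UI A1 by auto
  have s1: "A1' \<subseteq> I" unfolding A1'_def using XU UI A1 by auto
  have dj: "A0 \<inter> A1' = {}"
  proof -
    have "X i \<noteq> X j" if "i < n" "j < n" "z (Suc n) i" "\<not> z (Suc n) j" for i j
      using Xinj that by blast
    moreover have "X i \<noteq> A l" if "i < n" "l \<in> L" for i l using XA that L_def by auto
    moreover have "A l \<noteq> A l'" if "z n l" "\<not> z n l'" for l l' using A4 that by (metis injD)
    ultimately show ?thesis unfolding A0_def A1'_def by blast
  qed
  have inf: "infinite ((\<Inter>x\<in>A0. x) \<inter> (\<Inter>x\<in>A1'. - x))" by (rule indepD[OF ind f0 f1 s0 s1 dj])
  have sub: "(\<Inter>x\<in>A0. x) \<inter> (\<Inter>x\<in>A1'. - x) \<subseteq> {m. Pz A n N a z m}"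
  proof
    fix m assume m: "m \<in> (\<Inter>x\<in>A0. x) \<inter> (\<Inter>x\<in>A1'. - x)"
    have "z i m = z (Suc n) i" if "i < n" for i
    proof (cases "z (Suc n) i")
      case True
      then have "X i \<in> A0" unfolding A0_def using that by blast
      then show ?thesis using m True X_def by auto
    next
      case False
      then have "X i \<in> A1'" unfolding A1'_def using that by blast
      then show ?thesis using m False X_def by auto
    qed
    moreover have "(m \<in> A l) = z n l" if "N \<le> l" "l \<le> Suc a" for l
    proof (cases "z n l")
      case True
      then have "A l \<in> A0" unfolding A0_def L_def using that by auto
      then show ?thesis using m True by auto
    next
      case False
      then have "A l \<in> A1'" unfolding A1'_def L_def using that by auto
      then show ?thesis using m False by auto
    qed
    ultimately show "m \<in> {m. Pz A n N a z m}" unfolding Pz_def by blast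
  qed
  have "infinite {m. Pz A n N a z m}" using inf sub finite_subset by blast
  then obtain m where "a \<le> m" "Pz A n N a z m" unfolding infinite_nat_iff_unbounded_le by blast
  then have "Rz A n N a z (Suc m)" unfolding Rz_def by blast
  then show ?thesis by blast
qed

lemma Hb_spec:
  assumes ind: "independent_family I" and UI: "U \<subseteq> I" and cU: "closed (char_fun ` U)"
    and A1: "\<forall>l. A l \<in> I" and A2: "\<forall>l. char_fun (A l) \<noteq> B"
    and A3: "\<forall>l k. k < l \<longrightarrow> (k \<in> A l) = B k" and A4: "inj A"
  shows "\<forall>z\<in>Kset B U n N. Rz A n N a z (Hb A B U n N a)"
proof -
  have "compact (Kset B U n N \<inter> UNIV)"
    by (rule closed_Int_compact[OF Kset_closed[OF cU] compact_UNIV_bool_fun2])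
  then have cK: "compact (Kset B U n N)" by simp
  have "\<exists>M. \<forall>z\<in>Kset B U n N. Rz A n N a z M"
  proof (rule compact_bound[OF cK])
    show "\<And>M. open {z. Rz A n N a z M}" by (rule Rz_open)
    show "\<And>z. z \<in> Kset B U n N \<Longrightarrow> \<exists>M. Rz A n N a z M"
      by (rule hit_exists_z[OF ind UI A1 A2 A3 A4])
    show "\<And>z M M'. Rz A n N a z M \<Longrightarrow> M \<le> M' \<Longrightarrow> Rz A n N a z M'"
      unfolding Rz_def by (meson less_le_trans)
  qed
  then show ?thesis unfolding Hb_def by (rule LeastI_ex)
qed


definition Ft :: "(nat \<Rightarrow> nat set) \<Rightarrow> (nat \<Rightarrow> bool) \<Rightarrow> nat set set set \<Rightarrow> nat \<Rightarrow> nat" where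
  "Ft A B t k = (\<Sum>N\<le>k. \<Sum>n\<le>k. Hb A B (\<Union>t) n N (Hb A B (\<Union>t) n N k))"

lemma fin_bound:
  assumes "finite P" "\<forall>p\<in>P. \<exists>k::nat. Q p k"
  shows "\<exists>N. \<forall>p\<in>P. \<exists>k<N. Q p k"
proof -
  obtain kf where kf: "\<forall>p\<in>P. Q p (kf p)" using assms(2) by metis
  have "\<forall>p\<in>P. kf p < Suc (\<Sum>p\<in>P. kf p)"
    using member_le_sum[of _ P kf] assms(1) by (simp add: le_imp_less_Suc)
  then show ?thesis using kf by blast
qed

lemma sum_ge: "(i::nat) \<le> k \<Longrightarrow> (f i :: nat) \<le> (\<Sum>j\<le>k. f j)"
  by (rule member_le_sum) auto

lemma window:
  assumes hit: "\<And>\<tau>. \<exists>m. a \<le> m \<and> m < M \<and> m \<in> R \<and> (\<forall>l. N \<le> l \<and> l \<le> Suc a \<longrightarrow> (m \<in> A l) = \<tau> l)"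
    and j: "N \<le> j" "j \<le> Suc a"
    and phic: "\<And>m. a \<le> m \<Longrightarrow> m < M \<Longrightarrow> \<phi> m = j"
    and D: "D = {m. m \<in> A (\<phi> m)}"
  shows "(\<exists>m\<ge>a. m \<in> R \<inter> D) \<and> (\<exists>m\<ge>a. m \<in> R - D)"
proof
  obtain m where m: "a \<le> m" "m < M" "m \<in> R" "\<forall>l. N \<le> l \<and> l \<le> Suc a \<longrightarrow> (m \<in> A l) = True"
    using hit[of "\<lambda>l. True"] by blast
  then have "m \<in> A j" using j by blast
  then have "m \<in> D" using phic[OF m(1,2)] D by simp
  then show "\<exists>m\<ge>a. m \<in> R \<inter> D" using m by blast
next
  obtain m where m: "a \<le> m" "m < M" "m \<in> R" "\<forall>l. N \<le> l \<and> l \<le> Suc a \<longrightarrow> (m \<in> A l) = False"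
    using hit[of "\<lambda>l. False"] by blast
  then have "m \<notin> A j" using j by blast
  then have "m \<notin> D" using phic[OF m(1,2)] D by simp
  then show "\<exists>m\<ge>a. m \<in> R - D" using m by blast
qed

lemma main_split:
  assumes ind: "independent_family (\<Union>C)"
    and cl: "\<forall>c\<in>C. closed_in_P_omega c"
    and A1: "\<forall>l. A l \<in> \<Union>C" and A2: "\<forall>l. char_fun (A l) \<noteq> B"
    and A3: "\<forall>l k. k < l \<longrightarrow> (k \<in> A l) = B k" and A4: "inj A"
    and ng: "\<forall>t\<in>Fpow C. \<forall>K0. \<exists>k\<ge>K0. Ft A B t k < g k"
    and Gdef: "G = (\<lambda>k. Suc (k + (\<Sum>i\<le>k. g i)))"
    and kkdef: "kk = (\<lambda>j. (G ^^ j) 0)"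
    and phidef: "\<phi> = (\<lambda>m. LEAST j. m < kk (Suc j))"
    and Ddef: "D = {m. m \<in> A (\<phi> m)}"
    and H: "finite A0" "finite A1" "A0 \<subseteq> \<Union>C" "A1 \<subseteq> \<Union>C" "A0 \<inter> A1 = {}"
  shows "infinite (((\<Inter>x\<in>A0. x) \<inter> (\<Inter>x\<in>A1. - x)) \<inter> D) \<and> infinite (((\<Inter>x\<in>A0. x) \<inter> (\<Inter>x\<in>A1. - x)) - D)"
proof -
  let ?r = "(\<Inter>x\<in>A0. x) \<inter> (\<Inter>x\<in>A1. - x)"
  have Gmono: "G k \<le> G k'" if "k \<le> k'" for k k'
  proof -
    have "(\<Sum>i\<le>k. g i) \<le> (\<Sum>i\<le>k'. g i)" using that by (intro sum_mono2) auto
    then show ?thesis using that Gdef by simp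
  qed
  have Ggt: "k < G k" for k using Gdef by simp
  have gG: "g k \<le> G k" for k
  proof -
    have "g k \<le> (\<Sum>i\<le>k. g i)" by (rule member_le_sum) auto
    then show ?thesis using Gdef by simp
  qed
  have kk0: "kk 0 = 0" and kkS: "kk (Suc j) = G (kk j)" for j using kkdef by simp_all
  have kksm: "strict_mono kk" unfolding strict_mono_Suc_iff using kkS Ggt by simp
  have kkge: "j \<le> kk j" for j
  proof (induction j)
    case 0 then show ?case by simp
  next
    case (Suc j) then show ?case using kkS[of j] Ggt[of "kk j"] by simp
  qed
  have phi_eq: "\<phi> m = j" if "kk j \<le> m" "m < kk (Suc j)" for m j
    unfolding phidef
  proof (rule Least_equality)
    show "m < kk (Suc j)" by fact
  next
    fix y assume "m < kk (Suc y)"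
    show "j \<le> y"
    proof (rule ccontr)
      assume "\<not> j \<le> y"
      then have "Suc y \<le> j" by simp
      then have "kk (Suc y) \<le> kk j" using kksm by (simp add: strict_mono_less_eq)
      then show False using that \<open>m < kk (Suc y)\<close> by simp
    qed
  qed
  have phi_b: "kk (\<phi> m) \<le> m \<and> m < kk (Suc (\<phi> m))" for m
  proof -
    have ex: "m < kk (Suc m)" using kkge[of "Suc m"] by simp
    have 1: "m < kk (Suc (\<phi> m))" unfolding phidef by (rule LeastI[of _ m]) (rule ex)
    have "kk (\<phi> m) \<le> m"
    proof (cases "\<phi> m")
      case 0 then show ?thesis using kk0 by simp
    next
      case (Suc j')
      have "\<not> m < kk (Suc j')"
      proof
        assume "m < kk (Suc j')"
        then have "\<phi> m \<le> j'" unfolding phidef by (rule Least_le)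
        then show False using Suc by simp
      qed
      then show ?thesis using Suc by simp
    qed
    then show ?thesis using 1 by simp
  qed
  define S where "S = A0 \<union> A1"
  have finS: "finite S" using H S_def by simp
  obtain xs where xs: "set xs = S" "distinct xs" using finite_distinct_list[OF finS] by blast
  define n where "n = length xs"
  have xsI: "xs ! i \<in> \<Union>C" if "i < n" for i using that xs H S_def n_def nth_mem by blast
  have "\<forall>x\<in>\<Union>C. \<exists>c. c \<in> C \<and> x \<in> c" by blast
  then obtain cf where cf: "\<forall>x\<in>\<Union>C. cf x \<in> C \<and> x \<in> cf x" by (rule bchoice[THEN exE]) blast
  define t where "t = cf ` S"
  have SC: "S \<subseteq> \<Union>C" using H S_def by simp
  have tC: "t \<subseteq> C"
  proof
    fix c assume "c \<in> t"
    then obtain x where x: "x \<in> S" "c = cf x" unfolding t_def by blast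
    then have "x \<in> \<Union>C" using SC by blast
    then show "c \<in> C" using cf x by blast
  qed
  have ft: "finite t" using finS t_def by simp
  have tF: "t \<in> Fpow C" using tC ft by (simp add: Fpow_def)
  define U where "U = \<Union>t"
  have UI: "U \<subseteq> \<Union>C" unfolding U_def using tC by blast
  have cU: "closed (char_fun ` U)"
  proof -
    have "char_fun ` U = (\<Union>c\<in>t. char_fun ` c)" unfolding U_def by blast
    moreover have "finite t" by (rule ft)
    moreover have "\<forall>c\<in>t. closed (char_fun ` c)" using tF cl unfolding Fpow_def closed_in_P_omega_def by blast
    ultimately show ?thesis by (simp add: closed_UN)
  qed
  have xsU: "xs ! i \<in> U" if "i < n" for i
  proof -
    have "xs ! i \<in> S" using that xs n_def nth_mem by blast
    then show ?thesis using cf xsI[OF that] unfolding U_def t_def by blast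
  qed
  obtain N1 where N1: "\<forall>p\<in>{..<n} \<times> {..<n}. \<exists>k<N1. (fst p \<noteq> snd p \<longrightarrow> (k \<in> xs ! fst p) \<noteq> (k \<in> xs ! snd p))"
  proof -
    have "\<forall>p\<in>{..<n} \<times> {..<n}. \<exists>k. (fst p \<noteq> snd p \<longrightarrow> (k \<in> xs ! fst p) \<noteq> (k \<in> xs ! snd p))"
    proof
      fix p assume p: "p \<in> {..<n} \<times> {..<n}"
      show "\<exists>k. (fst p \<noteq> snd p \<longrightarrow> (k \<in> xs ! fst p) \<noteq> (k \<in> xs ! snd p))"
      proof (cases "fst p = snd p")
        case False
        moreover have "fst p < length xs" "snd p < length xs" using p n_def by auto
        ultimately have "xs ! fst p \<noteq> xs ! snd p" using xs(2) nth_eq_iff_index_eq by blast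
        then show ?thesis by blast
      qed simp
    qed
    note ex = this
    have fin: "finite ({..<n} \<times> {..<n})" by simp
    obtain N' where "\<forall>p\<in>{..<n} \<times> {..<n}. \<exists>k<N'. (fst p \<noteq> snd p \<longrightarrow> (k \<in> xs ! fst p) \<noteq> (k \<in> xs ! snd p))"
      using fin_bound[OF fin ex] by (elim exE)
    then show ?thesis by (rule that)
  qed
  obtain N2 where N2: "\<forall>i\<in>{..<n}. \<exists>k<N2. (char_fun (xs ! i) = B \<or> (k \<in> xs ! i) \<noteq> B k)"
  proof -
    have "\<forall>i\<in>{..<n}. \<exists>k. (char_fun (xs ! i) = B \<or> (k \<in> xs ! i) \<noteq> B k)"
      by (auto simp: fun_eq_iff char_fun_def)
    note ex = this
    have fin: "finite {..<n}" by simp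
    obtain N' where "\<forall>i\<in>{..<n}. \<exists>k<N'. (char_fun (xs ! i) = B \<or> (k \<in> xs ! i) \<noteq> B k)"
      using fin_bound[OF fin ex] by (elim exE)
    then show ?thesis by (rule that)
  qed
  define N where "N = N1 + N2"
  define zt where "zt \<tau> = (\<lambda>i. if i < n then char_fun (xs ! i) else if i = n then \<tau> else (\<lambda>i. xs ! i \<in> A0))" for \<tau>
  have zt_lt: "zt \<tau> i = char_fun (xs ! i)" if "i < n" for \<tau> i using that by (simp add: zt_def)
  have zt_n: "zt \<tau> n = \<tau>" for \<tau> by (simp add: zt_def)
  have zt_Sn: "zt \<tau> (Suc n) = (\<lambda>i. xs ! i \<in> A0)" for \<tau> by (simp add: zt_def)
  have ztK: "zt \<tau> \<in> Kset B U n N" for \<tau>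
    unfolding Kset_def
  proof (intro CollectI conjI allI impI)
    fix i assume "i < n" then show "zt \<tau> i \<in> char_fun ` U" using xsU zt_lt by simp
  next
    fix i j assume ij: "i < n" "j < n" "i \<noteq> j"
    have "(i,j) \<in> {..<n} \<times> {..<n}" using ij by simp
    then obtain k where k: "k < N1" "fst (i,j) \<noteq> snd (i,j) \<longrightarrow> (k \<in> xs ! fst (i,j)) \<noteq> (k \<in> xs ! snd (i,j))"
      using N1 by blast
    have "zt \<tau> i k \<noteq> zt \<tau> j k" using ij k by (simp add: zt_lt char_fun_apply)
    moreover have "k < N" using k N_def by simp
    ultimately show "\<exists>k<N. zt \<tau> i k \<noteq> zt \<tau> j k" by blast
  next
    fix i assume i: "i < n"
    then obtain k where k: "k < N2" "char_fun (xs ! i) = B \<or> (k \<in> xs ! i) \<noteq> B k" using N2 by blast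
    have "k < N" using k N_def by simp
    moreover have "zt \<tau> i = B \<or> zt \<tau> i k \<noteq> B k" using i k by (simp add: zt_lt char_fun_apply)
    ultimately show "zt \<tau> i = B \<or> (\<exists>k<N. zt \<tau> i k \<noteq> B k)" by blast
  qed
  have ztP: "m \<in> ?r \<and> (\<forall>l. N \<le> l \<and> l \<le> Suc a \<longrightarrow> (m \<in> A l) = \<tau> l)" if P: "Pz A n N a (zt \<tau>) m" for \<tau> a m
  proof
    have Pi: "(m \<in> xs ! i) = (xs ! i \<in> A0)" if "i < n" for i
    proof -
      have "zt \<tau> i m = zt \<tau> (Suc n) i" using P that unfolding Pz_def by blast
      then show ?thesis using that by (simp add: zt_lt zt_Sn char_fun_apply)
    qed
    have "m \<in> x" if "x \<in> A0" for x
    proof -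
      have "x \<in> set xs" using that xs S_def by blast
      then obtain i where "i < n" "xs ! i = x" by (auto simp: in_set_conv_nth n_def)
      then show ?thesis using Pi that by blast
    qed
    moreover have "m \<notin> x" if "x \<in> A1" for x
    proof -
      have "x \<in> set xs" using that xs S_def by blast
      then obtain i where "i < n" "xs ! i = x" by (auto simp: in_set_conv_nth n_def)
      moreover have "x \<notin> A0" using that H(5) by blast
      ultimately show ?thesis using Pi by blast
    qed
    ultimately show "m \<in> ?r" by simp
  next
    have "\<forall>l. N \<le> l \<and> l \<le> Suc a \<longrightarrow> (m \<in> A l) = zt \<tau> n l" using P unfolding Pz_def by blast
    then show "\<forall>l. N \<le> l \<and> l \<le> Suc a \<longrightarrow> (m \<in> A l) = \<tau> l" by (simp add: zt_n)
  qed
  define h where "h = Hb A B U n N"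
  have hspec: "\<forall>z\<in>Kset B U n N. Rz A n N a z (h a)" for a
    unfolding h_def by (rule Hb_spec[OF ind UI cU A1 A2 A3 A4])
  have hit: "\<exists>m. a \<le> m \<and> m < h a \<and> m \<in> ?r \<and> (\<forall>l. N \<le> l \<and> l \<le> Suc a \<longrightarrow> (m \<in> A l) = \<tau> l)" for a \<tau>
  proof -
    obtain m where "a \<le> m" "m < h a" "Pz A n N a (zt \<tau>) m" using hspec[of a] ztK[of \<tau>] unfolding Rz_def by blast
    then show ?thesis using ztP by blast
  qed
  have unb: "(\<exists>m\<ge>b. m \<in> ?r \<inter> D) \<and> (\<exists>m\<ge>b. m \<in> ?r - D)" for b
  proof -
    have "\<forall>K0. \<exists>k\<ge>K0. Ft A B t k < g k" using ng tF by blast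
    then obtain k where k: "k \<ge> b + N + n + kk N" "Ft A B t k < g k" by blast
    have "h (h k) \<le> (\<Sum>n'\<le>k. Hb A B (\<Union>t) n' N (Hb A B (\<Union>t) n' N k))"
      using sum_ge[of n k "\<lambda>n'. Hb A B (\<Union>t) n' N (Hb A B (\<Union>t) n' N k)"] k(1) unfolding h_def U_def by simp
    also have "\<dots> \<le> Ft A B t k"
      using sum_ge[of N k "\<lambda>N. \<Sum>n\<le>k. Hb A B (\<Union>t) n N (Hb A B (\<Union>t) n N k)"] k(1) unfolding Ft_def by simp
    finally have hh: "h (h k) < g k" using k(2) by simp
    define j where "j = \<phi> k"
    have jb: "kk j \<le> k" "k < kk (Suc j)" using phi_b[of k] j_def by auto
    have jN: "N \<le> j"
    proof (rule ccontr)
      assume "\<not> N \<le> j"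
      then have "Suc j \<le> N" by simp
      then have "kk (Suc j) \<le> kk N" using kksm by (simp add: strict_mono_less_eq)
      then show False using jb k(1) by simp
    qed
    have jk: "j \<le> k" using kkge[of j] jb by simp
    have "G k \<le> G (kk (Suc j))" using jb Gmono by simp
    then have Gk: "G k \<le> kk (Suc (Suc j))" using kkS by simp
    have hhk: "h (h k) < kk (Suc (Suc j))" using hh gG[of k] Gk by simp
    obtain m0 where "k \<le> m0" "m0 < h k" using hit[of k "\<lambda>l. True"] by blast
    then have khk: "k < h k" by simp
    show ?thesis
    proof (cases "h k \<le> kk (Suc j)")
      case True
      have "(\<exists>m\<ge>k. m \<in> ?r \<inter> D) \<and> (\<exists>m\<ge>k. m \<in> ?r - D)"
      proof (rule window[OF hit jN _ _ Ddef])
        show "j \<le> Suc k" using jk by simp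
        fix m assume "k \<le> m" "m < h k"
        then show "\<phi> m = j" using phi_eq jb True by simp
      qed
      then show ?thesis using k(1) by (meson add_leE le_trans)
    next
      case False
      have "(\<exists>m\<ge>h k. m \<in> ?r \<inter> D) \<and> (\<exists>m\<ge>h k. m \<in> ?r - D)"
      proof (rule window[OF hit _ _ _ Ddef])
        show "N \<le> Suc j" using jN by simp
        show "Suc j \<le> Suc (h k)" using kkge[of "Suc j"] False by simp
        fix m assume "h k \<le> m" "m < h (h k)"
        then show "\<phi> m = Suc j" using phi_eq[of "Suc j" m] False hhk by simp
      qed
      moreover have "b \<le> h k" using k(1) khk by simp
      ultimately show ?thesis by (meson le_trans)
    qed
  qed
  show ?thesis unfolding infinite_nat_iff_unbounded_le using unb by blast
qed


theorem theorem1p4: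
  fixes C :: "nat set set set"
  assumes "\<forall>c\<in>C. closed_in_P_omega c"
    and "maximal_independent_family (\<Union>C)"
  shows "\<exists>F. dominating_family F \<and> (\<exists>h. inj_on h F \<and> h ` F \<subseteq> C)"
proof -
  have ind: "independent_family (\<Union>C)" using assms(2) unfolding maximal_independent_family_def by blast
  show ?thesis
  proof (cases "finite (\<Union>C)")
    case True
    obtain D where D: "\<forall>A0 A1. finite A0 \<longrightarrow> finite A1 \<longrightarrow> A0 \<subseteq> \<Union>C \<longrightarrow> A1 \<subseteq> \<Union>C \<longrightarrow> A0 \<inter> A1 = {} \<longrightarrow>
       infinite (((\<Inter>x\<in>A0. x) \<inter> (\<Inter>x\<in>A1. - x)) \<inter> D) \<and> infinite (((\<Inter>x\<in>A0. x) \<inter> (\<Inter>x\<in>A1. - x)) - D)"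
      using finite_case_split[OF ind True] by blast
    have "\<not> maximal_independent_family (\<Union>C)"
      by (rule not_maximal_if_split[OF ind]) (use D in blast)
    then show ?thesis using assms(2) by blast
  next
    case False
    obtain A B where A1: "\<forall>l. A l \<in> \<Union>C" and A2: "\<forall>l. char_fun (A l) \<noteq> B"
      and A3: "\<forall>l k. k < l \<longrightarrow> (k \<in> A l) = B k" and A4: "inj A"
      using seq_exists[OF False] by blast
    have domc: "\<exists>t\<in>Fpow C. \<forall>\<^sub>F k in sequentially. g k \<le> Ft A B t k" for g
    proof (rule ccontr)
      assume na: "\<not> (\<exists>t\<in>Fpow C. \<forall>\<^sub>F k in sequentially. g k \<le> Ft A B t k)"
      have ng: "\<forall>t\<in>Fpow C. \<forall>K0. \<exists>k\<ge>K0. Ft A B t k < g k"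
        using na unfolding eventually_sequentially by (meson not_le)
      define G where "G = (\<lambda>k. Suc (k + (\<Sum>i\<le>k. g i)))"
      define kk where "kk = (\<lambda>j. (G ^^ j) 0)"
      define \<phi> where "\<phi> = (\<lambda>m. LEAST j. m < kk (Suc j))"
      define D where "D = {m. m \<in> A (\<phi> m)}"
      have "\<not> maximal_independent_family (\<Union>C)"
      proof (rule not_maximal_if_split[OF ind])
        fix A0 A1 assume "finite A0" "finite A1" "A0 \<subseteq> \<Union>C" "A1 \<subseteq> \<Union>C" "A0 \<inter> A1 = {}"
        then show "infinite (((\<Inter>x\<in>A0. x) \<inter> (\<Inter>x\<in>A1. - x)) \<inter> D) \<and> infinite (((\<Inter>x\<in>A0. x) \<inter> (\<Inter>x\<in>A1. - x)) - D)"
          by (rule main_split[OF ind assms(1) A1 A2 A3 A4 ng G_def kk_def \<phi>_def D_def])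
      qed
      then show False using assms(2) by blast
    qed
    define F where "F = Ft A B ` Fpow C"
    have domF: "dominating_family F"
      unfolding dominating_family_def F_def using domc by blast
    show ?thesis
    proof (cases "finite C")
      case True
      then have "finite (Fpow C)" by (simp add: Fpow_def)
      then have "countable F" unfolding F_def by (simp add: countable_finite)
      then show ?thesis using countable_not_dominating domF by blast
    next
      case False
      have "F \<lesssim> Fpow C" unfolding F_def by (rule image_lepoll)
      also have "Fpow C \<lesssim> C" using eqpoll_Fpow[OF False] by (rule eqpoll_imp_lepoll)
      finally have "F \<lesssim> C" .
      then show ?thesis using domF unfolding lepoll_def by blast
    qed
  qed
qed


end
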